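(* Let $A\in\mathbb{R}^{n\times n}$, $B\in\mathbb{R}^{n\times r}$, and shifts $\alpha_1,\ldots,\alpha_j\in\mathbb{C}$ with $\mathrm{Re}(\alpha_i)<0$ and $A+\alpha_iI$ nonsingular. Let $w_i$ ($0\le i\le j$) be the residual factors of the inexact LR-ADI iteration with $M=I$ described in the context, with linear-system residuals $s_i$, and let $w^{\mathrm{exact}}_j:=\Big[\prod_{k=1}^{j}\mathcal{C}_k\Big]B$ be the residual factor of the exact LR-ADI iteration (all $s_i=0$). Then $$w_j=w^{\mathrm{exact}}_j-\sum_{i=1}^{j}\Big[\prod_{k=i+1}^{j}\mathcal{C}_k\Big](\mathcal{C}_i-I)s_i.$$
   Context: $\mathcal{C}_k:=(A+\alpha_kI)^{-1}(A-\overline{\alpha_k}I)$ (these matrices commute with each other); products $\prod_{k=i+1}^{j}\mathcal{C}_k=\mathcal{C}_j\cdots\mathcal{C}_{i+1}$, empty product $=I$. Inexact LR-ADI with $M=I$: $w_0:=B$, $\gamma_i:=\sqrt{-2\,\mathrm{Re}(\alpha_i)}$; $v_i$ arbitrary with $s_i:=w_{i-1}-(A+\alpha_iI)v_i$, and $w_i:=w_{i-1}+\gamma_i^2v_i$. *)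

theory Defs
  imports "HOL-Analysis.Analysis"
begin

definition cmat :: "real^'c^'r \<Rightarrow> complex^'c^'r" where
  "cmat X = (\<chi> i j. complex_of_real (X $ i $ j))"

definition cayley :: "real^'n^'n \<Rightarrow> complex \<Rightarrow> complex^'n^'n" where
  "cayley A a = matrix_inv (cmat A + mat a) ** (cmat A - mat (cnj a))"

text \<open>Ordered product C_j ... C_{i+1} (= identity if j <= i).\<close>
primrec cayley_prod :: "real^'n^'n \<Rightarrow> (nat \<Rightarrow> complex) \<Rightarrow> nat \<Rightarrow> nat \<Rightarrow> complex^'n^'n" where
  "cayley_prod A \<alpha> i 0 = mat 1"
| "cayley_prod A \<alpha> i (Suc j) =
     (if i \<le> j then cayley A (\<alpha> (Suc j)) ** cayley_prod A \<alpha> i j else mat 1)"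

end

theory Submission
  imports Defs
begin

lemma minv_left:
  fixes M :: "'a::semiring_1^'n^'n"
  assumes "invertible M" shows "matrix_inv M ** M = mat 1"
  using someI_ex[OF assms[unfolded invertible_def]] unfolding matrix_inv_def by blast

lemma mm_sub_l: "(A::'a::ring_1^'n^'m) ** (B - C) = A ** B - A ** C"
  by (simp add: matrix_matrix_mult_def vec_eq_iff algebra_simps sum_subtractf)

lemma mm_sub_r: "((A::'a::ring_1^'n^'m) - B) ** C = A ** C - B ** C"
  by (simp add: matrix_matrix_mult_def vec_eq_iff algebra_simps sum_subtractf)

lemma mm_add_r: "((A::'a::ring_1^'n^'m) + B) ** C = A ** C + B ** C"
  by (simp add: matrix_matrix_mult_def vec_eq_iff algebra_simps sum.distrib)

lemma mm_sum_l: "(X::'a::ring_1^'n^'m) ** sum f S = sum (\<lambda>i. X ** f i) S"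
  by (induction S rule: infinite_finite_induct) (auto simp: matrix_add_ldistrib)

lemma mat_of_real: "mat (complex_of_real c) = (c *\<^sub>R mat 1 :: complex^'n^'n)"
  by (auto simp: mat_def vec_eq_iff scaleR_vec_def of_real_def)

lemma cayley_eq:
  assumes inv: "invertible (cmat A + mat a)"
  shows "cayley A a = mat 1 - (2 * Re a) *\<^sub>R matrix_inv (cmat A + mat a)"
proof -
  let ?M = "cmat A + mat a"
  have e1: "cmat A - mat (cnj a) = ?M - mat (complex_of_real (2 * Re a))"
    by (simp add: mat_def vec_eq_iff complex_eq_iff)
  have e2: "cmat A - mat (cnj a) = ?M - (2 * Re a) *\<^sub>R mat 1" unfolding e1 mat_of_real ..
  have "cayley A a = matrix_inv ?M ** (?M - (2 * Re a) *\<^sub>R mat 1)"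
    by (simp only: cayley_def e2)
  also have "\<dots> = mat 1 - (2 * Re a) *\<^sub>R matrix_inv ?M"
    by (simp add: mm_sub_l minv_left[OF inv] matrix_scalar_ac)
  finally show ?thesis .
qed

theorem lemma3p4:
  fixes A :: "real^'n^'n" and B :: "real^'r^'n"
    and \<alpha> :: "nat \<Rightarrow> complex" and j :: nat
    and v w s :: "nat \<Rightarrow> complex^'r^'n"
  assumes shifts: "\<And>i. 1 \<le> i \<Longrightarrow> i \<le> j \<Longrightarrow> Re (\<alpha> i) < 0"
    and nonsing: "\<And>i. 1 \<le> i \<Longrightarrow> i \<le> j \<Longrightarrow> invertible (cmat A + mat (\<alpha> i))"
    and w0: "w 0 = cmat B"
    and sdef: "\<And>i. 1 \<le> i \<Longrightarrow> i \<le> j \<Longrightarrow> s i = w (i - 1) - (cmat A + mat (\<alpha> i)) ** v i"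
    and wdef: "\<And>i. 1 \<le> i \<Longrightarrow> i \<le> j \<Longrightarrow>
                 w i = w (i - 1) + (sqrt (- 2 * Re (\<alpha> i)))\<^sup>2 *\<^sub>R v i"
  shows "w j = cayley_prod A \<alpha> 0 j ** cmat B
               - (\<Sum>i = 1..j. cayley_prod A \<alpha> i j ** (cayley A (\<alpha> i) - mat 1) ** s i)"
proof -
  have step: "w i = cayley A (\<alpha> i) ** w (i - 1) - (cayley A (\<alpha> i) - mat 1) ** s i"
    if i1: "1 \<le> i" and ij: "i \<le> j" for i
  proof -
    let ?M = "cmat A + mat (\<alpha> i)"
    have inv: "invertible ?M" using nonsing i1 ij .
    have g: "(sqrt (- (2 * Re (\<alpha> i))))\<^sup>2 = - (2 * Re (\<alpha> i))"
      using shifts[OF i1 ij] by simp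
    have "w (i - 1) - s i = ?M ** v i" using sdef[OF i1 ij] by simp
    hence vi: "v i = matrix_inv ?M ** (w (i - 1) - s i)"
      by (simp add: matrix_mul_assoc minv_left[OF inv])
    have C: "cayley A (\<alpha> i) - mat 1 = (- 2 * Re (\<alpha> i)) *\<^sub>R matrix_inv ?M"
      using cayley_eq[OF inv] by simp
    have "w i = w (i - 1) + (cayley A (\<alpha> i) - mat 1) ** (w (i - 1) - s i)"
      using wdef[OF i1 ij] by (simp add: g vi C scalar_matrix_assoc scaleR_minus_left[symmetric] del: scaleR_minus_left)
    also have "\<dots> = cayley A (\<alpha> i) ** w (i - 1) - (cayley A (\<alpha> i) - mat 1) ** s i"
      by (simp add: mm_sub_l mm_sub_r algebra_simps)
    finally show ?thesis .
  qed
  have "\<forall>m\<le>j. w m = cayley_prod A \<alpha> 0 m ** cmat B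
               - (\<Sum>i = 1..m. cayley_prod A \<alpha> i m ** (cayley A (\<alpha> i) - mat 1) ** s i)"
  proof (intro allI impI)
    fix m assume "m \<le> j"
    then show "w m = cayley_prod A \<alpha> 0 m ** cmat B
               - (\<Sum>i = 1..m. cayley_prod A \<alpha> i m ** (cayley A (\<alpha> i) - mat 1) ** s i)"
    proof (induction m)
      case 0
      then show ?case by (simp add: w0)
    next
      case (Suc m)
      let ?C = "cayley A (\<alpha> (Suc m))"
      note IH = Suc.IH[OF Suc_leD[OF Suc.prems]]
      have sum_mul: "?C ** (\<Sum>i = 1..m. cayley_prod A \<alpha> i m ** (cayley A (\<alpha> i) - mat 1) ** s i)
          = (\<Sum>i = 1..m. cayley_prod A \<alpha> i (Suc m) ** (cayley A (\<alpha> i) - mat 1) ** s i)"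
      proof -
        have "?C ** (\<Sum>i = 1..m. cayley_prod A \<alpha> i m ** (cayley A (\<alpha> i) - mat 1) ** s i)
           = (\<Sum>i = 1..m. ?C ** (cayley_prod A \<alpha> i m ** (cayley A (\<alpha> i) - mat 1) ** s i))"
          by (rule mm_sum_l)
        also have "\<dots> = (\<Sum>i = 1..m. cayley_prod A \<alpha> i (Suc m) ** (cayley A (\<alpha> i) - mat 1) ** s i)"
          by (intro sum.cong) (auto simp: matrix_mul_assoc)
        finally show ?thesis .
      qed
      have "w (Suc m) = ?C ** w m - (?C - mat 1) ** s (Suc m)"
        using step[of "Suc m"] Suc.prems by simp
      also have "\<dots> = cayley_prod A \<alpha> 0 (Suc m) ** cmat B
          - (\<Sum>i = 1..m. cayley_prod A \<alpha> i (Suc m) ** (cayley A (\<alpha> i) - mat 1) ** s i)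
          - (?C - mat 1) ** s (Suc m)"
        unfolding IH mm_sub_l[of ?C] sum_mul by (simp add: matrix_mul_assoc)
      also have "\<dots> = cayley_prod A \<alpha> 0 (Suc m) ** cmat B
          - (\<Sum>i = 1..Suc m. cayley_prod A \<alpha> i (Suc m) ** (cayley A (\<alpha> i) - mat 1) ** s i)"
        by (simp add: algebra_simps)
      finally show ?case .
    qed
  qed
  then show ?thesis by simp
qed

end
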